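(* Let $b,c\in Z^{10}$ with $\sum_i b_i=\sum_i c_i=0$, and assume $t\nmid B_i$, $t\nmid C_i$, $t\nmid B_i+B_{i+2}$ and $t\nmid C_i+C_{i+2}$ for all odd $i$ (indices mod $10$). Then $\mathbb{M}(b)\cong\mathbb{M}(c)$ as $B_{5,10}$-modules if and only if both $$t\mid C_1B_3(C_5+C_7)B_9-B_1C_3(B_5+B_7)C_9\quad\text{and}\quad t\mid C_1B_3C_5(B_7+B_9)-B_1C_3B_5(C_7+C_9).$$
   Context: Let $Z=\mathbb{C}[[t]]$. Let $\Gamma_{10}$ be the quiver with vertices $0,1,\dots,9$ (indices taken mod $10$) on a cycle and arrows $x_i\colon i-1\to i$, $y_i\colon i\to i-1$ for $i=1,\dots,10$. Let $B_{5,10}$ be the completed path algebra of $\Gamma_{10}$ modulo the closed ideal generated by $xy=yx$ and $x^5=y^5$ at every vertex. For $b=(b_1,\dots,b_{10})\in Z^{10}$ with $\sum_i b_i=0$, the $B_{5,10}$-module $\mathbb{M}(b)$ has $V_i=Z\oplus Z$ at every vertex, and for odd $j$: $x_j=\begin{pmatrix} t& b_j\\ 0&1\end{pmatrix}$, $y_j=\begin{pmatrix} 1&-b_j\\0&t\end{pmatrix}$; for even $j$: $x_j=\begin{pmatrix}1&b_j\\0&t\end{pmatrix}$, $y_j=\begin{pmatrix}t&-b_j\\0&1\end{pmatrix}$. An isomorphism $\mathbb{M}(b)\to\mathbb{M}(c)$ is a family of invertible $Z$-linear maps $\varphi_i\colon Z^2\to Z^2$ commuting with all $x_i$ and $y_i$.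 For odd $i$ write $B_i=b_i+b_{i+1}$ and $C_i=c_i+c_{i+1}$ (indices mod $10$). *)

theory Defs
  imports "HOL-Analysis.Analysis" "HOL-Computational_Algebra.Formal_Power_Series"
begin

text \<open>Z = C[[t]] is complex fps; t = fps_X. Z-linear maps Z^2 -> Z^2 are 2x2 matrices
  over Z acting on column vectors.  Vertices 0..9; arrows j = 1..10,
  x_j : (j-1) -> (j mod 10), y_j : (j mod 10) -> (j-1).  Sequences b are indexed by 1..10.\<close>

type_synonym Z = "complex fps"

definition mat2 :: "Z \<Rightarrow> Z \<Rightarrow> Z \<Rightarrow> Z \<Rightarrow> Z^2^2" where
  "mat2 a b c d = vector [vector [a, b], vector [c, d]]"

definition xmat :: "(nat \<Rightarrow> Z) \<Rightarrow> nat \<Rightarrow> Z^2^2" where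
  "xmat b j = (if odd j then mat2 fps_X (b j) 0 1 else mat2 1 (b j) 0 fps_X)"

definition ymat :: "(nat \<Rightarrow> Z) \<Rightarrow> nat \<Rightarrow> Z^2^2" where
  "ymat b j = (if odd j then mat2 1 (- b j) 0 fps_X else mat2 fps_X (- b j) 0 1)"

definition M_iso :: "(nat \<Rightarrow> Z) \<Rightarrow> (nat \<Rightarrow> Z) \<Rightarrow> bool" where
  "M_iso b c \<longleftrightarrow> (\<exists>\<phi> :: nat \<Rightarrow> Z^2^2.
      (\<forall>i<10. invertible (\<phi> i)) \<and>
      (\<forall>j\<in>{1..10}. \<phi> (j mod 10) ** xmat b j = xmat c j ** \<phi> (j - 1) \<and>
                    \<phi> (j - 1) ** ymat b j = ymat c j ** \<phi> (j mod 10)))"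

text \<open>B_i = b_i + b_{i+1} for odd i in 1..9 (no wraparound needed).\<close>
definition Bs :: "(nat \<Rightarrow> Z) \<Rightarrow> nat \<Rightarrow> Z" where
  "Bs b i = b i + b (i + 1)"

definition nxt :: "nat \<Rightarrow> nat" where
  "nxt i = (if i + 2 > 10 then i + 2 - 10 else i + 2)"

end

theory Submission
  imports Defs
begin

lemma mat2_nth: "mat2 a b c d $ 1 $ 1 = a" "mat2 a b c d $ 1 $ 2 = b"
   "mat2 a b c d $ 2 $ 1 = c" "mat2 a b c d $ 2 $ 2 = d"
  by (simp_all add: mat2_def)

lemma mat2_eta: "(A::Z^2^2) = mat2 (A$1$1) (A$1$2) (A$2$1) (A$2$2)"
  by (simp add: mat2_def vec_eq_iff forall_2)

lemma mat2_eq: "mat2 a b c d = mat2 a' b' c' d' \<longleftrightarrow> a = a' \<and> b = b' \<and> c = c' \<and> d = d'"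
  by (auto simp add: mat2_def vec_eq_iff forall_2)

lemma mat2_mult: "mat2 a b c d ** mat2 e f g h = mat2 (a*e+b*g) (a*f+b*h) (c*e+d*g) (c*f+d*h)"
  by (simp add: mat2_def vec_eq_iff forall_2 matrix_matrix_mult_def sum_2)

lemma mat2_one: "(mat 1 :: Z^2^2) = mat2 1 0 0 1"
  by (simp add: mat2_def vec_eq_iff forall_2 mat_def)

lemma det_mat2: "det (mat2 a b c d) = a*d - b*c"
  by (simp add: det_2 mat2_nth)

lemma X_dvd_iff: "fps_X dvd (f::Z) \<longleftrightarrow> fps_nth f 0 = 0"
proof
  assume "fps_X dvd f" then obtain g where "f = fps_X * g" by (auto elim: dvdE)
  then show "fps_nth f 0 = 0" by simp
next
  assume h: "fps_nth f 0 = 0"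
  have "f = fps_X * fps_shift 1 f"
    by (rule fps_ext) (simp add: h)
  then show "fps_X dvd f" by (metis dvd_triv_left)
qed

lemma X_cancel: "fps_X * (f::Z) = fps_X * g \<Longrightarrow> f = g"
  by (simp add: fps_X_neq_zero)

lemma mat2_invertible:
  assumes "fps_nth (a*d - b*c) 0 \<noteq> 0"
  shows "invertible (mat2 a b c d)"
proof -
  define e where "e = inverse (a*d-b*c)"
  have e: "(a*d-b*c) * e = 1" using assms unfolding e_def by (rule inverse_mult_eq_1')
  show ?thesis unfolding invertible_def
    apply (rule exI[of _ "mat2 (d*e) (-b*e) (-c*e) (a*e)"])
    using e by (simp add: mat2_mult mat2_one mat2_eq algebra_simps)
qed

lemma invertible_det0:
  assumes "invertible (A::Z^2^2)"
  shows "fps_nth (det A) 0 \<noteq> 0"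
proof -
  obtain A' where "A ** A' = mat 1" using assms unfolding invertible_def by blast
  then have "det A * det A' = 1" by (metis det_mul det_I)
  then have "fps_nth (det A * det A') 0 = 1" by simp
  then show ?thesis by auto
qed

lemma odd_step:
  fixes p q r s b c :: Z
  shows "mat2 (p + c * r) (fps_X * q + c * s - (p + c * r) * b) r (s - b * r) ** mat2 fps_X b 0 1
           = mat2 fps_X c 0 1 ** mat2 p q (fps_X * r) s"
    and "mat2 p q (fps_X * r) s ** mat2 1 (- b) 0 fps_X
           = mat2 1 (- c) 0 fps_X ** mat2 (p + c * r) (fps_X * q + c * s - (p + c * r) * b) r (s - b * r)"
    and "det (mat2 (p + c * r) (fps_X * q + c * s - (p + c * r) * b) r (s - b * r)) = p * s - fps_X * q * r"
  by (simp_all add: mat2_mult mat2_eq det_mat2 algebra_simps)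

lemma even_step:
  fixes P Q r S Q2 b c :: Z
  assumes h: "fps_X * Q2 = Q + c * S - (P + c * r) * b"
  shows "mat2 (P + c * r) Q2 (fps_X * r) (S - b * r) ** mat2 1 b 0 fps_X = mat2 1 c 0 fps_X ** mat2 P Q r S"
    and "mat2 P Q r S ** mat2 fps_X (- b) 0 1 = mat2 fps_X (- c) 0 1 ** mat2 (P + c * r) Q2 (fps_X * r) (S - b * r)"
    and "det (mat2 (P + c * r) Q2 (fps_X * r) (S - b * r)) = P * S - Q * r"
proof -
  have h': "Q = fps_X * Q2 - c * S + (P + c * r) * b" using h by (simp add: algebra_simps)
  show "mat2 (P + c * r) Q2 (fps_X * r) (S - b * r) ** mat2 1 b 0 fps_X = mat2 1 c 0 fps_X ** mat2 P Q r S"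
    by (simp add: mat2_mult mat2_eq algebra_simps h')
  show "mat2 P Q r S ** mat2 fps_X (- b) 0 1 = mat2 fps_X (- c) 0 1 ** mat2 (P + c * r) Q2 (fps_X * r) (S - b * r)"
    by (simp add: mat2_mult mat2_eq h' algebra_simps)
  show "det (mat2 (P + c * r) Q2 (fps_X * r) (S - b * r)) = P * S - Q * r"
    by (simp add: det_mat2 algebra_simps h')
qed

lemma pair_step:
  fixes A Phi Phi' :: "Z^2^2" and b c b' c' :: Z
  assumes h1: "A ** mat2 fps_X b 0 1 = mat2 fps_X c 0 1 ** Phi"
    and h2: "Phi' ** mat2 1 b' 0 fps_X = mat2 1 c' 0 fps_X ** A"
  shows "Phi$2$1 = fps_X * A$2$1" "Phi'$2$1 = fps_X * A$2$1"
    "Phi'$1$1 = Phi$1$1 + (c+c') * A$2$1" "Phi'$2$2 = Phi$2$2 - (b+b') * A$2$1"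
    "fps_nth ((c+c') * Phi$2$2 - (b+b') * Phi$1$1 - (b+b') * (c+c') * A$2$1) 0 = 0"
proof -
  obtain p q r s where Phi: "Phi = mat2 p q r s" by (meson mat2_eta)
  obtain p1 q1 r1 s1 where A: "A = mat2 p1 q1 r1 s1" by (meson mat2_eta)
  obtain P Q R S where Phi': "Phi' = mat2 P Q R S" by (meson mat2_eta)
  have H1: "mat2 (p1 * fps_X + q1 * 0) (p1 * b + q1 * 1) (r1 * fps_X + s1 * 0) (r1 * b + s1 * 1)
      = mat2 (fps_X * p + c * r) (fps_X * q + c * s) (0 * p + 1 * r) (0 * q + 1 * s)"
    using h1 by (simp only: A Phi mat2_mult)
  have e11: "p1 * fps_X = fps_X * p + c * r" using H1[unfolded mat2_eq, THEN conjunct1] by simp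
  have e12: "p1 * b + q1 = fps_X * q + c * s" using H1[unfolded mat2_eq, THEN conjunct2, THEN conjunct1] by simp
  have e13: "r1 * fps_X = r" using H1[unfolded mat2_eq, THEN conjunct2, THEN conjunct2, THEN conjunct1] by simp
  have e14: "r1 * b + s1 = s" using H1[unfolded mat2_eq, THEN conjunct2, THEN conjunct2, THEN conjunct2] by simp
  have H2: "mat2 (P * 1 + Q * 0) (P * b' + Q * fps_X) (R * 1 + S * 0) (R * b' + S * fps_X)
      = mat2 (1 * p1 + c' * r1) (1 * q1 + c' * s1) (0 * p1 + fps_X * r1) (0 * q1 + fps_X * s1)"
    using h2 by (simp only: A Phi' mat2_mult)
  have e21: "P = p1 + c' * r1" using H2[unfolded mat2_eq, THEN conjunct1] by simp
  have e22: "P * b' + Q * fps_X = q1 + c' * s1" using H2[unfolded mat2_eq, THEN conjunct2, THEN conjunct1] by simp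
  have e23: "R = fps_X * r1" using H2[unfolded mat2_eq, THEN conjunct2, THEN conjunct2, THEN conjunct1] by simp
  have e24: "R * b' + S * fps_X = fps_X * s1" using H2[unfolded mat2_eq, THEN conjunct2, THEN conjunct2, THEN conjunct2] by simp
  have rr: "r = fps_X * r1" using e13 by (simp add: mult.commute)
  have "fps_X * p1 = fps_X * (p + c * r1)" using e11 rr by (simp add: algebra_simps)
  then have pp: "p1 = p + c * r1" by (rule X_cancel)
  have "fps_X * S = fps_X * (s1 - b' * r1)" using e23 e24 by (simp add: algebra_simps)
  then have SS: "S = s1 - b' * r1" by (rule X_cancel)
  have ss: "s1 = s - b * r1" using e14 by (simp add: algebra_simps)
  show "Phi$2$1 = fps_X * A$2$1" "Phi'$2$1 = fps_X * A$2$1"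
    using rr e23 by (simp_all add: A Phi Phi' mat2_nth)
  show "Phi'$1$1 = Phi$1$1 + (c+c') * A$2$1" "Phi'$2$2 = Phi$2$2 - (b+b') * A$2$1"
    using e21 pp SS ss by (simp_all add: A Phi Phi' mat2_nth algebra_simps)
  have q1: "q1 = fps_X * q + c * s - p1 * b" using e12 by (simp add: algebra_simps)
  have "(c+c') * s - (b+b') * p - (b+b') * (c+c') * r1 = Q * fps_X - fps_X * q"
    using e21 e22 q1 pp ss by (simp add: algebra_simps)
  then show "fps_nth ((c+c') * Phi$2$2 - (b+b') * Phi$1$1 - (b+b') * (c+c') * A$2$1) 0 = 0"
    by (simp add: A Phi mat2_nth)
qed

lemma X_shift: "fps_nth (f::Z) 0 = 0 \<Longrightarrow> fps_X * fps_shift 1 f = f"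
  by (rule fps_ext) simp

lemma pair_construct:
  fixes p q r s u b c b' c' :: Z
  assumes hu: "fps_X * u = (c + c') * s - (b + b') * p - (b + b') * (c + c') * r"
  shows "mat2 (p + c * r) (fps_X * q + c * s - (p + c * r) * b) r (s - b * r) ** mat2 fps_X b 0 1
           = mat2 fps_X c 0 1 ** mat2 p q (fps_X * r) s"
    and "mat2 p q (fps_X * r) s ** mat2 1 (- b) 0 fps_X
           = mat2 1 (- c) 0 fps_X ** mat2 (p + c * r) (fps_X * q + c * s - (p + c * r) * b) r (s - b * r)"
    and "mat2 (p + (c + c') * r) (q + u) (fps_X * r) (s - (b + b') * r) ** mat2 1 b' 0 fps_X
           = mat2 1 c' 0 fps_X ** mat2 (p + c * r) (fps_X * q + c * s - (p + c * r) * b) r (s - b * r)"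
    and "mat2 (p + c * r) (fps_X * q + c * s - (p + c * r) * b) r (s - b * r) ** mat2 fps_X (- b') 0 1
           = mat2 fps_X (- c') 0 1 ** mat2 (p + (c + c') * r) (q + u) (fps_X * r) (s - (b + b') * r)"
    and "det (mat2 (p + c * r) (fps_X * q + c * s - (p + c * r) * b) r (s - b * r)) = p * s - fps_X * q * r"
    and "det (mat2 (p + (c + c') * r) (q + u) (fps_X * r) (s - (b + b') * r)) = p * s - fps_X * q * r"
proof -
  show "mat2 (p + c * r) (fps_X * q + c * s - (p + c * r) * b) r (s - b * r) ** mat2 fps_X b 0 1
           = mat2 fps_X c 0 1 ** mat2 p q (fps_X * r) s"
    and "mat2 p q (fps_X * r) s ** mat2 1 (- b) 0 fps_X
           = mat2 1 (- c) 0 fps_X ** mat2 (p + c * r) (fps_X * q + c * s - (p + c * r) * b) r (s - b * r)"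
    by (rule odd_step(1), rule odd_step(2))
  have "fps_X * (q + u) = fps_X * q + fps_X * u" by (simp add: distrib_left)
  also have "\<dots> = fps_X * q + ((c + c') * s - (b + b') * p - (b + b') * (c + c') * r)" by (simp add: hu)
  also have "\<dots> = (fps_X * q + c * s - (p + c * r) * b) + c' * (s - b * r) - (p + c * r + c' * r) * b'"
    by (simp add: algebra_simps)
  finally have h: "fps_X * (q + u) = (fps_X * q + c * s - (p + c * r) * b) + c' * (s - b * r) - (p + c * r + c' * r) * b'" .
  have eq1: "p + c * r + c' * r = p + (c + c') * r" and eq2: "s - b * r - b' * r = s - (b + b') * r"
    by (simp_all add: algebra_simps)
  note E = even_step[OF h, unfolded eq1 eq2]
  show "mat2 (p + (c + c') * r) (q + u) (fps_X * r) (s - (b + b') * r) ** mat2 1 b' 0 fps_X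
           = mat2 1 c' 0 fps_X ** mat2 (p + c * r) (fps_X * q + c * s - (p + c * r) * b) r (s - b * r)"
    by (rule E(1))
  show "mat2 (p + c * r) (fps_X * q + c * s - (p + c * r) * b) r (s - b * r) ** mat2 fps_X (- b') 0 1
           = mat2 fps_X (- c') 0 1 ** mat2 (p + (c + c') * r) (q + u) (fps_X * r) (s - (b + b') * r)"
    by (rule E(2))
  show D: "det (mat2 (p + c * r) (fps_X * q + c * s - (p + c * r) * b) r (s - b * r)) = p * s - fps_X * q * r"
    by (rule odd_step(3))
  show "det (mat2 (p + (c + c') * r) (q + u) (fps_X * r) (s - (b + b') * r)) = p * s - fps_X * q * r"
    using E(3) D by (simp add: det_mat2)
qed

lemma det3_zero:
  fixes a1 a2 a3 b1 b2 b3 c1 c2 c3 w1 w2 w3 :: complex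
  assumes "a1 * w1+a2 * w2+a3 * w3 = 0" "b1 * w1+b2 * w2+b3 * w3 = 0" "c1 * w1+c2 * w2+c3 * w3 = 0" "w1 \<noteq> 0"
  shows "a1 * (b2 * c3-b3 * c2) - a2 * (b1 * c3-b3 * c1) + a3 * (b1 * c2-b2 * c1) = 0"
proof -
  have "(a1 * (b2 * c3-b3 * c2) - a2 * (b1 * c3-b3 * c1) + a3 * (b1 * c2-b2 * c1))  *  w1
      = (a1 * w1+a2 * w2+a3 * w3) * (b2 * c3-b3 * c2) + (b1 * w1+b2 * w2+b3 * w3) * (c2 * a3-c3 * a2)
        + (c1 * w1+c2 * w2+c3 * w3) * (a2 * b3-a3 * b2)"
    by (simp add: algebra_simps)
  with assms show ?thesis by simp
qed

lemma core:
  fixes b1 b2 b3 b4 b5 g1 g2 g3 g4 g5 :: complex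
  assumes sb: "b1+b2+b3+b4+b5 = 0" and sg: "g1+g2+g3+g4+g5 = 0"
    and nz: "b1 \<noteq> 0" "b2 \<noteq> 0" "g1 \<noteq> 0" "g2 \<noteq> 0" "b1+b2 \<noteq> 0" "g1+g2 \<noteq> 0"
  shows "(\<exists>p s r. p \<noteq> 0 \<and> s \<noteq> 0 \<and>
      g1 * s - b1 * p - b1 * g1 * r = 0 \<and>
      g2 * (s - b1 * r) - b2 * (p + g1 * r) - b2 * g2 * r = 0 \<and>
      g3 * (s - (b1+b2) * r) - b3 * (p + (g1+g2) * r) - b3 * g3 * r = 0 \<and>
      g4 * (s-(b1+b2+b3) * r) - b4 * (p+(g1+g2+g3) * r) - b4 * g4 * r = 0 \<and>
      g5 * (s-(b1+b2+b3+b4) * r) - b5 * (p+(g1+g2+g3+g4) * r) - b5 * g5 * r = 0)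
   \<longleftrightarrow> (g1 * b2 * (g3+g4) * b5 - b1 * g2 * (b3+b4) * g5 = 0 \<and>
        g1 * b2 * g3 * (b4+b5) - b1 * g2 * b3 * (g4+g5) = 0)"
proof -
  have b5: "b5 = -(b1+b2+b3+b4)" using sb by (metis add.commute add.left_commute eq_neg_iff_add_eq_0)
  have g5: "g5 = -(g1+g2+g3+g4)" using sg by (metis add.commute add.left_commute eq_neg_iff_add_eq_0)
  show ?thesis
  proof
    assume "\<exists>p s r. p \<noteq> 0 \<and> s \<noteq> 0 \<and>
      g1 * s - b1 * p - b1 * g1 * r = 0 \<and>
      g2 * (s - b1 * r) - b2 * (p + g1 * r) - b2 * g2 * r = 0 \<and>
      g3 * (s - (b1+b2) * r) - b3 * (p + (g1+g2) * r) - b3 * g3 * r = 0 \<and>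
      g4 * (s-(b1+b2+b3) * r) - b4 * (p+(g1+g2+g3) * r) - b4 * g4 * r = 0 \<and>
      g5 * (s-(b1+b2+b3+b4) * r) - b5 * (p+(g1+g2+g3+g4) * r) - b5 * g5 * r = 0"
    then obtain p s r where s: "s \<noteq> 0" and
      e1: "g1 * s + (-b1) * p + (-b1 * g1) * r = 0" and
      e2: "g2 * s + (-b2) * p + (-(g2 * b1 + b2 * g1 + b2 * g2)) * r = 0" and
      e3: "g3 * s + (-b3) * p + (-(g3 * (b1+b2) + b3 * (g1+g2) + b3 * g3)) * r = 0" and
      e4: "g4 * s + (-b4) * p + (-(g4 * (b1+b2+b3) + b4 * (g1+g2+g3) + b4 * g4)) * r = 0"
      by (auto simp: algebra_simps)
    have d3: "g1 * ((-b2) * (-(g3 * (b1+b2) + b3 * (g1+g2) + b3 * g3)) - (-(g2 * b1 + b2 * g1 + b2 * g2)) * (-b3))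
       - (-b1) * (g2 * (-(g3 * (b1+b2) + b3 * (g1+g2) + b3 * g3)) - (-(g2 * b1 + b2 * g1 + b2 * g2)) * g3)
       + (-b1 * g1) * (g2 * (-b3) - (-b2) * g3) = 0"
      by (rule det3_zero[OF e1 e2 e3 s])
    have d4: "g1 * ((-b2) * (-(g4 * (b1+b2+b3) + b4 * (g1+g2+g3) + b4 * g4)) - (-(g2 * b1 + b2 * g1 + b2 * g2)) * (-b4))
       - (-b1) * (g2 * (-(g4 * (b1+b2+b3) + b4 * (g1+g2+g3) + b4 * g4)) - (-(g2 * b1 + b2 * g1 + b2 * g2)) * g4)
       + (-b1 * g1) * (g2 * (-b4) - (-b2) * g4) = 0"
      by (rule det3_zero[OF e1 e2 e4 s])
    have P2: "g1 * b2 * g3 * (b4+b5) - b1 * g2 * b3 * (g4+g5) = 0"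
      using d3 unfolding b5 g5 by (simp add: algebra_simps)
    have "g1 * b2 * (g3+g4) * b5 - b1 * g2 * (b3+b4) * g5 = (g1 * b2 * g3 * (b4+b5) - b1 * g2 * b3 * (g4+g5)) - (g1 * ((-b2) * (-(g4 * (b1+b2+b3) + b4 * (g1+g2+g3) + b4 * g4)) - (-(g2 * b1 + b2 * g1 + b2 * g2)) * (-b4))
       - (-b1) * (g2 * (-(g4 * (b1+b2+b3) + b4 * (g1+g2+g3) + b4 * g4)) - (-(g2 * b1 + b2 * g1 + b2 * g2)) * g4)
       + (-b1 * g1) * (g2 * (-b4) - (-b2) * g4))"
      unfolding b5 g5 by (simp add: algebra_simps)
    with d4 P2 show "g1 * b2 * (g3+g4) * b5 - b1 * g2 * (b3+b4) * g5 = 0 \<and>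
        g1 * b2 * g3 * (b4+b5) - b1 * g2 * b3 * (g4+g5) = 0" by simp
  next
    assume P: "g1 * b2 * (g3+g4) * b5 - b1 * g2 * (b3+b4) * g5 = 0 \<and>
        g1 * b2 * g3 * (b4+b5) - b1 * g2 * b3 * (g4+g5) = 0"
    show "\<exists>p s r. p \<noteq> 0 \<and> s \<noteq> 0 \<and>
      g1 * s - b1 * p - b1 * g1 * r = 0 \<and>
      g2 * (s - b1 * r) - b2 * (p + g1 * r) - b2 * g2 * r = 0 \<and>
      g3 * (s - (b1+b2) * r) - b3 * (p + (g1+g2) * r) - b3 * g3 * r = 0 \<and>
      g4 * (s-(b1+b2+b3) * r) - b4 * (p+(g1+g2+g3) * r) - b4 * g4 * r = 0 \<and>
      g5 * (s-(b1+b2+b3+b4) * r) - b5 * (p+(g1+g2+g3+g4) * r) - b5 * g5 * r = 0"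
    proof (intro exI conjI)
      let ?p = "g1 * b2 * (g1+g2)" and ?s = "b1 * g2 * (b1+b2)" and ?r = "g2 * b1 - b2 * g1"
      let ?P1 = "g1 * b2 * (g3+g4) * b5 - b1 * g2 * (b3+b4) * g5"
      let ?P2 = "g1 * b2 * g3 * (b4+b5) - b1 * g2 * b3 * (g4+g5)"
      show "?p \<noteq> 0" "?s \<noteq> 0" using nz by auto
      show "g1 * ?s - b1 * ?p - b1 * g1 * ?r = 0" by (simp add: algebra_simps)
      show "g2 * (?s - b1 * ?r) - b2 * (?p + g1 * ?r) - b2 * g2 * ?r = 0" by (simp add: algebra_simps)
      have "g3 * (?s - (b1+b2) * ?r) - b3 * (?p + (g1+g2) * ?r) - b3 * g3 * ?r = - ?P2"
        unfolding b5 g5 by (simp add: algebra_simps)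
      then show "g3 * (?s - (b1+b2) * ?r) - b3 * (?p + (g1+g2) * ?r) - b3 * g3 * ?r = 0" using P by simp
      have "g4 * (?s-(b1+b2+b3) * ?r) - b4 * (?p+(g1+g2+g3) * ?r) - b4 * g4 * ?r = ?P2 - ?P1"
        unfolding b5 g5 by (simp add: algebra_simps)
      then show "g4 * (?s-(b1+b2+b3) * ?r) - b4 * (?p+(g1+g2+g3) * ?r) - b4 * g4 * ?r = 0" using P by simp
      have "g5 * (?s-(b1+b2+b3+b4) * ?r) - b5 * (?p+(g1+g2+g3+g4) * ?r) - b5 * g5 * ?r = ?P1"
        unfolding b5 g5 by (simp add: algebra_simps)
      then show "g5 * (?s-(b1+b2+b3+b4) * ?r) - b5 * (?p+(g1+g2+g3+g4) * ?r) - b5 * g5 * ?r = 0" using P by simp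
    qed
  qed
qed

lemma bs_eqs: "Bs f 1 = f 1 + f 2" "Bs f (Suc 0) = f 1 + f 2" "Bs f 3 = f 3 + f 4" "Bs f 5 = f 5 + f 6" "Bs f 7 = f 7 + f 8" "Bs f 9 = f 9 + f 10"
  by (simp_all add: Bs_def numeral_eq_Suc)

lemma inv_det: "fps_nth (det (M::Z^2^2)) 0 \<noteq> 0 \<Longrightarrow> invertible M"
  by (metis mat2_eta mat2_invertible det_mat2)

lemma sum10: "(\<Sum>i=1..10. (f::nat \<Rightarrow> Z) i) = Bs f 1 + Bs f 3 + Bs f 5 + Bs f 7 + Bs f 9"
  by (simp add: Bs_def eval_nat_numeral atLeastAtMostSuc_conv add.commute add.left_commute)

theorem theorem2p10:
  fixes b c :: "nat \<Rightarrow> complex fps"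
  assumes "(\<Sum>i=1..10. b i) = 0" and "(\<Sum>i=1..10. c i) = 0"
    and "\<forall>i\<in>{1,3,5,7,9}. \<not> fps_X dvd Bs b i \<and> \<not> fps_X dvd Bs c i \<and>
           \<not> fps_X dvd (Bs b i + Bs b (nxt i)) \<and> \<not> fps_X dvd (Bs c i + Bs c (nxt i))"
  shows "M_iso b c \<longleftrightarrow>
    (fps_X dvd (Bs c 1 * Bs b 3 * (Bs c 5 + Bs c 7) * Bs b 9
                - Bs b 1 * Bs c 3 * (Bs b 5 + Bs b 7) * Bs c 9) \<and>
     fps_X dvd (Bs c 1 * Bs b 3 * Bs c 5 * (Bs b 7 + Bs b 9)
                - Bs b 1 * Bs c 3 * Bs b 5 * (Bs c 7 + Bs c 9)))"
proof -
  have sb: "Bs b 1 + Bs b 3 + Bs b 5 + Bs b 7 + Bs b 9 = 0" using assms(1) sum10 by metis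
  have sc: "Bs c 1 + Bs c 3 + Bs c 5 + Bs c 7 + Bs c 9 = 0" using assms(2) sum10 by metis
  have nxt: "nxt 1 = 3" by (simp add: nxt_def)
  have nz: "fps_nth (Bs b 1) 0 \<noteq> 0" "fps_nth (Bs b 3) 0 \<noteq> 0" "fps_nth (Bs c 1) 0 \<noteq> 0" "fps_nth (Bs c 3) 0 \<noteq> 0"
     "fps_nth (Bs b 1) 0 + fps_nth (Bs b 3) 0 \<noteq> 0" "fps_nth (Bs c 1) 0 + fps_nth (Bs c 3) 0 \<noteq> 0"
    using bspec[OF assms(3), of 1] bspec[OF assms(3), of 3] nxt by (simp_all add: X_dvd_iff)
  have sb0: "fps_nth (Bs b 1) 0 + fps_nth (Bs b 3) 0 + fps_nth (Bs b 5) 0 + fps_nth (Bs b 7) 0 + fps_nth (Bs b 9) 0 = 0"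
    using arg_cong[OF sb, of "\<lambda>f. fps_nth f 0"] by simp
  have sc0: "fps_nth (Bs c 1) 0 + fps_nth (Bs c 3) 0 + fps_nth (Bs c 5) 0 + fps_nth (Bs c 7) 0 + fps_nth (Bs c 9) 0 = 0"
    using arg_cong[OF sc, of "\<lambda>f. fps_nth f 0"] by simp
  note C = core[OF sb0 sc0 nz]

  let ?E = "\<exists>p s r. p \<noteq> 0 \<and> s \<noteq> 0 \<and>
      fps_nth (Bs c 1) 0 * s - fps_nth (Bs b 1) 0 * p - fps_nth (Bs b 1) 0 * fps_nth (Bs c 1) 0 * r = 0 \<and>
      fps_nth (Bs c 3) 0 * (s - fps_nth (Bs b 1) 0 * r) - fps_nth (Bs b 3) 0 * (p + fps_nth (Bs c 1) 0 * r) - fps_nth (Bs b 3) 0 * fps_nth (Bs c 3) 0 * r = 0 \<and>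
      fps_nth (Bs c 5) 0 * (s - (fps_nth (Bs b 1) 0 + fps_nth (Bs b 3) 0) * r) - fps_nth (Bs b 5) 0 * (p + (fps_nth (Bs c 1) 0 + fps_nth (Bs c 3) 0) * r) - fps_nth (Bs b 5) 0 * fps_nth (Bs c 5) 0 * r = 0 \<and>
      fps_nth (Bs c 7) 0 * (s - (fps_nth (Bs b 1) 0 + fps_nth (Bs b 3) 0 + fps_nth (Bs b 5) 0) * r) - fps_nth (Bs b 7) 0 * (p + (fps_nth (Bs c 1) 0 + fps_nth (Bs c 3) 0 + fps_nth (Bs c 5) 0) * r) - fps_nth (Bs b 7) 0 * fps_nth (Bs c 7) 0 * r = 0 \<and>
      fps_nth (Bs c 9) 0 * (s - (fps_nth (Bs b 1) 0 + fps_nth (Bs b 3) 0 + fps_nth (Bs b 5) 0 + fps_nth (Bs b 7) 0) * r) - fps_nth (Bs b 9) 0 * (p + (fps_nth (Bs c 1) 0 + fps_nth (Bs c 3) 0 + fps_nth (Bs c 5) 0 + fps_nth (Bs c 7) 0) * r) - fps_nth (Bs b 9) 0 * fps_nth (Bs c 9) 0 * r = 0"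
  have R: "(fps_X dvd (Bs c 1 * Bs b 3 * (Bs c 5 + Bs c 7) * Bs b 9
                - Bs b 1 * Bs c 3 * (Bs b 5 + Bs b 7) * Bs c 9) \<and>
     fps_X dvd (Bs c 1 * Bs b 3 * Bs c 5 * (Bs b 7 + Bs b 9)
                - Bs b 1 * Bs c 3 * Bs b 5 * (Bs c 7 + Bs c 9))) \<longleftrightarrow> ?E"
    unfolding C by (simp add: X_dvd_iff)
  have F: "M_iso b c \<Longrightarrow> ?E"
  proof -
    assume "M_iso b c"
    then obtain \<phi> where inv: "\<forall>i<10. invertible (\<phi> i)" and
      eq: "\<forall>j\<in>{1..10}. \<phi> (j mod 10) ** xmat b j = xmat c j ** \<phi> (j - 1) \<and>
                    \<phi> (j - 1) ** ymat b j = ymat c j ** \<phi> (j mod 10)"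
      unfolding M_iso_def by blast
    have x: "\<And>j. j \<in> {1..10} \<Longrightarrow> \<phi> (j mod 10) ** xmat b j = xmat c j ** \<phi> (j - 1)" using eq by blast
    have x1: "\<phi> 1 ** mat2 fps_X (b 1) 0 1 = mat2 fps_X (c 1) 0 1 ** \<phi> 0" using x[of 1] by (simp add: xmat_def)
    have x2: "\<phi> 2 ** mat2 1 (b 2) 0 fps_X = mat2 1 (c 2) 0 fps_X ** \<phi> 1" using x[of 2] by (simp add: xmat_def)
    have x3: "\<phi> 3 ** mat2 fps_X (b 3) 0 1 = mat2 fps_X (c 3) 0 1 ** \<phi> 2" using x[of 3] by (simp add: xmat_def)
    have x4: "\<phi> 4 ** mat2 1 (b 4) 0 fps_X = mat2 1 (c 4) 0 fps_X ** \<phi> 3" using x[of 4] by (simp add: xmat_def)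
    have x5: "\<phi> 5 ** mat2 fps_X (b 5) 0 1 = mat2 fps_X (c 5) 0 1 ** \<phi> 4" using x[of 5] by (simp add: xmat_def)
    have x6: "\<phi> 6 ** mat2 1 (b 6) 0 fps_X = mat2 1 (c 6) 0 fps_X ** \<phi> 5" using x[of 6] by (simp add: xmat_def)
    have x7: "\<phi> 7 ** mat2 fps_X (b 7) 0 1 = mat2 fps_X (c 7) 0 1 ** \<phi> 6" using x[of 7] by (simp add: xmat_def)
    have x8: "\<phi> 8 ** mat2 1 (b 8) 0 fps_X = mat2 1 (c 8) 0 fps_X ** \<phi> 7" using x[of 8] by (simp add: xmat_def)
    have x9: "\<phi> 9 ** mat2 fps_X (b 9) 0 1 = mat2 fps_X (c 9) 0 1 ** \<phi> 8" using x[of 9] by (simp add: xmat_def)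
    have x10: "\<phi> 0 ** mat2 1 (b 10) 0 fps_X = mat2 1 (c 10) 0 fps_X ** \<phi> 9" using x[of 10] by (simp add: xmat_def)
    note Q0 = pair_step[OF x1 x2]
    note Q1 = pair_step[OF x3 x4]
    note Q2 = pair_step[OF x5 x6]
    note Q3 = pair_step[OF x7 x8]
    note Q4 = pair_step[OF x9 x10]
    have r3: "\<phi> 3 $ 2 $ 1 = \<phi> 1 $ 2 $ 1" using Q0(2) Q1(1) X_cancel by metis
    have r5: "\<phi> 5 $ 2 $ 1 = \<phi> 1 $ 2 $ 1" using Q1(2) Q2(1) X_cancel r3 by metis
    have r7: "\<phi> 7 $ 2 $ 1 = \<phi> 1 $ 2 $ 1" using Q2(2) Q3(1) X_cancel r5 by metis
    have r9: "\<phi> 9 $ 2 $ 1 = \<phi> 1 $ 2 $ 1" using Q3(2) Q4(1) X_cancel r7 by metis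
    have d0: "fps_nth (det (\<phi> 0)) 0 \<noteq> 0" using inv invertible_det0 by simp
    then have ps: "fps_nth (\<phi> 0 $ 1 $ 1) 0 * fps_nth (\<phi> 0 $ 2 $ 2) 0 \<noteq> 0"
      using Q0(1) by (simp add: det_2)
    show ?E
      apply (rule exI[of _ "fps_nth (\<phi> 0 $ 1 $ 1) 0"], rule exI[of _ "fps_nth (\<phi> 0 $ 2 $ 2) 0"],
         rule exI[of _ "fps_nth (\<phi> 1 $ 2 $ 1) 0"], intro conjI)
      subgoal using ps by auto
      subgoal using ps by auto
      subgoal using Q0(5) by (simp add: bs_eqs algebra_simps)
      subgoal using Q1(5) Q0(3,4) r3 by (simp add: bs_eqs algebra_simps)
      subgoal using Q2(5) Q1(3,4) Q0(3,4) r3 r5 by (simp add: bs_eqs algebra_simps)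
      subgoal using Q3(5) Q2(3,4) Q1(3,4) Q0(3,4) r3 r5 r7 by (simp add: bs_eqs algebra_simps)
      subgoal using Q4(5) Q3(3,4) Q2(3,4) Q1(3,4) Q0(3,4) r3 r5 r7 r9 by (simp add: bs_eqs algebra_simps)
      done
  qed
  have B: "?E \<Longrightarrow> M_iso b c"
  proof -
    assume "?E"
    then obtain p0 s0 r0 where p0: "p0 \<noteq> 0" and s0: "s0 \<noteq> 0" and
      E1: "fps_nth (Bs c 1) 0 * s0 - fps_nth (Bs b 1) 0 * p0 - fps_nth (Bs b 1) 0 * fps_nth (Bs c 1) 0 * r0 = 0" and
      E2: "fps_nth (Bs c 3) 0 * (s0 - fps_nth (Bs b 1) 0 * r0) - fps_nth (Bs b 3) 0 * (p0 + fps_nth (Bs c 1) 0 * r0) - fps_nth (Bs b 3) 0 * fps_nth (Bs c 3) 0 * r0 = 0" and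
      E3: "fps_nth (Bs c 5) 0 * (s0 - (fps_nth (Bs b 1) 0 + fps_nth (Bs b 3) 0) * r0) - fps_nth (Bs b 5) 0 * (p0 + (fps_nth (Bs c 1) 0 + fps_nth (Bs c 3) 0) * r0) - fps_nth (Bs b 5) 0 * fps_nth (Bs c 5) 0 * r0 = 0" and
      E4: "fps_nth (Bs c 7) 0 * (s0 - (fps_nth (Bs b 1) 0 + fps_nth (Bs b 3) 0 + fps_nth (Bs b 5) 0) * r0) - fps_nth (Bs b 7) 0 * (p0 + (fps_nth (Bs c 1) 0 + fps_nth (Bs c 3) 0 + fps_nth (Bs c 5) 0) * r0) - fps_nth (Bs b 7) 0 * fps_nth (Bs c 7) 0 * r0 = 0" and
      E5: "fps_nth (Bs c 9) 0 * (s0 - (fps_nth (Bs b 1) 0 + fps_nth (Bs b 3) 0 + fps_nth (Bs b 5) 0 + fps_nth (Bs b 7) 0) * r0) - fps_nth (Bs b 9) 0 * (p0 + (fps_nth (Bs c 1) 0 + fps_nth (Bs c 3) 0 + fps_nth (Bs c 5) 0 + fps_nth (Bs c 7) 0) * r0) - fps_nth (Bs b 9) 0 * fps_nth (Bs c 9) 0 * r0 = 0"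
      by blast
    define p where "p = fps_const p0"
    define s where "s = fps_const s0"
    define \<rho> where "\<rho> = fps_const r0"
    define F0 where "F0 = mat2 p 0 (fps_X * \<rho>) s"
    define u0 where "u0 = fps_shift 1 ((c 1 + c 2) * s - (b 1 + b 2) * p - (b 1 + b 2) * (c 1 + c 2) * \<rho>)"
    have T0: "fps_nth ((c 1 + c 2) * s - (b 1 + b 2) * p - (b 1 + b 2) * (c 1 + c 2) * \<rho>) 0 = 0" using E1 by (simp add: p_def s_def \<rho>_def bs_eqs algebra_simps)
    have hu0: "fps_X * u0 = (c 1 + c 2) * s - (b 1 + b 2) * p - (b 1 + b 2) * (c 1 + c 2) * \<rho>" unfolding u0_def by (rule X_shift[OF T0])
    define p1 where "p1 = p + (c 1 + c 2) * \<rho>"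
    define q1 where "q1 = 0 + u0"
    define s1 where "s1 = s - (b 1 + b 2) * \<rho>"
    define A0 where "A0 = mat2 (p + c 1 * \<rho>) (fps_X * 0 + c 1 * s - (p + c 1 * \<rho>) * b 1) \<rho> (s - b 1 * \<rho>)"
    define F1 where "F1 = mat2 p1 q1 (fps_X * \<rho>) s1"
    note K0 = pair_construct[where q="0", OF hu0, folded p1_def q1_def s1_def, folded A0_def F0_def F1_def]
    define u1 where "u1 = fps_shift 1 ((c 3 + c 4) * s1 - (b 3 + b 4) * p1 - (b 3 + b 4) * (c 3 + c 4) * \<rho>)"
    have T1: "fps_nth ((c 3 + c 4) * s1 - (b 3 + b 4) * p1 - (b 3 + b 4) * (c 3 + c 4) * \<rho>) 0 = 0" using E1 E2 by (simp add: p_def s_def \<rho>_def p1_def s1_def bs_eqs algebra_simps)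
    have hu1: "fps_X * u1 = (c 3 + c 4) * s1 - (b 3 + b 4) * p1 - (b 3 + b 4) * (c 3 + c 4) * \<rho>" unfolding u1_def by (rule X_shift[OF T1])
    define p2 where "p2 = p1 + (c 3 + c 4) * \<rho>"
    define q2 where "q2 = q1 + u1"
    define s2 where "s2 = s1 - (b 3 + b 4) * \<rho>"
    define A1 where "A1 = mat2 (p1 + c 3 * \<rho>) (fps_X * q1 + c 3 * s1 - (p1 + c 3 * \<rho>) * b 3) \<rho> (s1 - b 3 * \<rho>)"
    define F2 where "F2 = mat2 p2 q2 (fps_X * \<rho>) s2"
    note K1 = pair_construct[where q="q1", OF hu1, folded p2_def q2_def s2_def, folded A1_def F1_def F2_def]
    define u2 where "u2 = fps_shift 1 ((c 5 + c 6) * s2 - (b 5 + b 6) * p2 - (b 5 + b 6) * (c 5 + c 6) * \<rho>)"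
    have T2: "fps_nth ((c 5 + c 6) * s2 - (b 5 + b 6) * p2 - (b 5 + b 6) * (c 5 + c 6) * \<rho>) 0 = 0" using E1 E2 E3 by (simp add: p_def s_def \<rho>_def p1_def s1_def p2_def s2_def bs_eqs algebra_simps)
    have hu2: "fps_X * u2 = (c 5 + c 6) * s2 - (b 5 + b 6) * p2 - (b 5 + b 6) * (c 5 + c 6) * \<rho>" unfolding u2_def by (rule X_shift[OF T2])
    define p3 where "p3 = p2 + (c 5 + c 6) * \<rho>"
    define q3 where "q3 = q2 + u2"
    define s3 where "s3 = s2 - (b 5 + b 6) * \<rho>"
    define A2 where "A2 = mat2 (p2 + c 5 * \<rho>) (fps_X * q2 + c 5 * s2 - (p2 + c 5 * \<rho>) * b 5) \<rho> (s2 - b 5 * \<rho>)"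
    define F3 where "F3 = mat2 p3 q3 (fps_X * \<rho>) s3"
    note K2 = pair_construct[where q="q2", OF hu2, folded p3_def q3_def s3_def, folded A2_def F2_def F3_def]
    define u3 where "u3 = fps_shift 1 ((c 7 + c 8) * s3 - (b 7 + b 8) * p3 - (b 7 + b 8) * (c 7 + c 8) * \<rho>)"
    have T3: "fps_nth ((c 7 + c 8) * s3 - (b 7 + b 8) * p3 - (b 7 + b 8) * (c 7 + c 8) * \<rho>) 0 = 0" using E1 E2 E3 E4 by (simp add: p_def s_def \<rho>_def p1_def s1_def p2_def s2_def p3_def s3_def bs_eqs algebra_simps)
    have hu3: "fps_X * u3 = (c 7 + c 8) * s3 - (b 7 + b 8) * p3 - (b 7 + b 8) * (c 7 + c 8) * \<rho>" unfolding u3_def by (rule X_shift[OF T3])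
    define p4 where "p4 = p3 + (c 7 + c 8) * \<rho>"
    define q4 where "q4 = q3 + u3"
    define s4 where "s4 = s3 - (b 7 + b 8) * \<rho>"
    define A3 where "A3 = mat2 (p3 + c 7 * \<rho>) (fps_X * q3 + c 7 * s3 - (p3 + c 7 * \<rho>) * b 7) \<rho> (s3 - b 7 * \<rho>)"
    define F4 where "F4 = mat2 p4 q4 (fps_X * \<rho>) s4"
    note K3 = pair_construct[where q="q3", OF hu3, folded p4_def q4_def s4_def, folded A3_def F3_def F4_def]
    define u4 where "u4 = fps_shift 1 ((c 9 + c 10) * s4 - (b 9 + b 10) * p4 - (b 9 + b 10) * (c 9 + c 10) * \<rho>)"
    have T4: "fps_nth ((c 9 + c 10) * s4 - (b 9 + b 10) * p4 - (b 9 + b 10) * (c 9 + c 10) * \<rho>) 0 = 0" using E1 E2 E3 E4 E5 by (simp add: p_def s_def \<rho>_def p1_def s1_def p2_def s2_def p3_def s3_def p4_def s4_def bs_eqs algebra_simps)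
    have hu4: "fps_X * u4 = (c 9 + c 10) * s4 - (b 9 + b 10) * p4 - (b 9 + b 10) * (c 9 + c 10) * \<rho>" unfolding u4_def by (rule X_shift[OF T4])
    define p5 where "p5 = p4 + (c 9 + c 10) * \<rho>"
    define q5 where "q5 = q4 + u4"
    define s5 where "s5 = s4 - (b 9 + b 10) * \<rho>"
    define A4 where "A4 = mat2 (p4 + c 9 * \<rho>) (fps_X * q4 + c 9 * s4 - (p4 + c 9 * \<rho>) * b 9) \<rho> (s4 - b 9 * \<rho>)"
    define F5 where "F5 = mat2 p5 q5 (fps_X * \<rho>) s5"
    note K4 = pair_construct[where q="q4", OF hu4, folded p5_def q5_def s5_def, folded A4_def F4_def F5_def]
    have sB: "((b 1 + b 2) + (b 3 + b 4) + (b 5 + b 6) + (b 7 + b 8) + (b 9 + b 10)) = 0" using sb unfolding bs_eqs .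
    have sC: "((c 1 + c 2) + (c 3 + c 4) + (c 5 + c 6) + (c 7 + c 8) + (c 9 + c 10)) = 0" using sc unfolding bs_eqs .
    have "p5 = p + ((c 1 + c 2) + (c 3 + c 4) + (c 5 + c 6) + (c 7 + c 8) + (c 9 + c 10)) * \<rho>" unfolding p5_def p1_def p2_def p3_def p4_def s1_def s2_def s3_def s4_def by (simp add: algebra_simps)
    then have pp5: "p5 = p" using sC by simp
    have "s5 = s - ((b 1 + b 2) + (b 3 + b 4) + (b 5 + b 6) + (b 7 + b 8) + (b 9 + b 10)) * \<rho>" unfolding s5_def p1_def p2_def p3_def p4_def s1_def s2_def s3_def s4_def by (simp add: algebra_simps)
    then have ss5: "s5 = s" using sB by simp
    have "fps_X * q5 = ((c 1 + c 2) * s - (b 1 + b 2) * p - (b 1 + b 2) * (c 1 + c 2) * \<rho>) + ((c 3 + c 4) * s1 - (b 3 + b 4) * p1 - (b 3 + b 4) * (c 3 + c 4) * \<rho>) + ((c 5 + c 6) * s2 - (b 5 + b 6) * p2 - (b 5 + b 6) * (c 5 + c 6) * \<rho>) + ((c 7 + c 8) * s3 - (b 7 + b 8) * p3 - (b 7 + b 8) * (c 7 + c 8) * \<rho>) + ((c 9 + c 10) * s4 - (b 9 + b 10) * p4 - (b 9 + b 10) * (c 9 + c 10) * \<rho>)" unfolding q5_def q4_def q3_def q2_def q1_def by (simp only: distrib_left mult_zero_right add_0_left hu0 hu1 hu2 hu3 hu4)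
    also have "\<dots> = s * ((c 1 + c 2) + (c 3 + c 4) + (c 5 + c 6) + (c 7 + c 8) + (c 9 + c 10)) - p * ((b 1 + b 2) + (b 3 + b 4) + (b 5 + b 6) + (b 7 + b 8) + (b 9 + b 10)) - \<rho> * ((b 1 + b 2) + (b 3 + b 4) + (b 5 + b 6) + (b 7 + b 8) + (b 9 + b 10)) * ((c 1 + c 2) + (c 3 + c 4) + (c 5 + c 6) + (c 7 + c 8) + (c 9 + c 10))" unfolding p1_def p2_def p3_def p4_def s1_def s2_def s3_def s4_def by (simp add: algebra_simps)
    also have "\<dots> = 0" using sB sC by simp
    finally have qq5: "q5 = 0" by (simp add: fps_X_neq_zero)
    have F50: "F5 = F0" unfolding F5_def F0_def pp5 qq5 ss5 ..
    have dF0: "fps_nth (det F0) 0 \<noteq> 0" using p0 s0 by (simp add: F0_def det_mat2 p_def s_def)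
    have dF1: "det F1 = det F0" using K0(6) by (simp add: F0_def det_mat2)
    have dA0: "det A0 = det F0" using K0(5) by (simp add: F0_def det_mat2)
    have dF2: "det F2 = det F0" using K1(6) dF1 by (simp add: F1_def det_mat2 algebra_simps)
    have dA1: "det A1 = det F0" using K1(5) dF1 by (simp add: F1_def det_mat2 algebra_simps)
    have dF3: "det F3 = det F0" using K2(6) dF2 by (simp add: F2_def det_mat2 algebra_simps)
    have dA2: "det A2 = det F0" using K2(5) dF2 by (simp add: F2_def det_mat2 algebra_simps)
    have dF4: "det F4 = det F0" using K3(6) dF3 by (simp add: F3_def det_mat2 algebra_simps)
    have dA3: "det A3 = det F0" using K3(5) dF3 by (simp add: F3_def det_mat2 algebra_simps)
    have dF5: "det F5 = det F0" using K4(6) dF4 by (simp add: F4_def det_mat2 algebra_simps)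
    have dA4: "det A4 = det F0" using K4(5) dF4 by (simp add: F4_def det_mat2 algebra_simps)
    have invs: "invertible F0" "invertible F1" "invertible F2" "invertible F3" "invertible F4" "invertible A0" "invertible A1" "invertible A2" "invertible A3" "invertible A4"
      using dF0 dF1 dF2 dF3 dF4 dA0 dA1 dA2 dA3 dA4 inv_det by simp_all
    define \<phi> where "\<phi> = (\<lambda>i::nat. if i = 0 then F0 else if i = 1 then A0 else if i = 2 then F1 else if i = 3 then A1 else if i = 4 then F2 else if i = 5 then A2 else if i = 6 then F3 else if i = 7 then A3 else if i = 8 then F4 else A4)"
    have phis: "\<phi> (Suc 0) = A0" "\<phi> 0 = F0" "\<phi> 1 = A0" "\<phi> 2 = F1" "\<phi> 3 = A1" "\<phi> 4 = F2" "\<phi> 5 = A2" "\<phi> 6 = F3" "\<phi> 7 = A3" "\<phi> 8 = F4" "\<phi> 9 = A4" by (simp_all add: \<phi>_def)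
    have xy1: "\<phi> (1 mod 10) ** xmat b 1 = xmat c 1 ** \<phi> (1 - 1) \<and> \<phi> (1 - 1) ** ymat b 1 = ymat c 1 ** \<phi> (1 mod 10)"
      using K0(1) K0(2) by (simp add: phis xmat_def ymat_def)
    have xy2: "\<phi> (2 mod 10) ** xmat b 2 = xmat c 2 ** \<phi> (2 - 1) \<and> \<phi> (2 - 1) ** ymat b 2 = ymat c 2 ** \<phi> (2 mod 10)"
      using K0(3) K0(4) by (simp add: phis xmat_def ymat_def)
    have xy3: "\<phi> (3 mod 10) ** xmat b 3 = xmat c 3 ** \<phi> (3 - 1) \<and> \<phi> (3 - 1) ** ymat b 3 = ymat c 3 ** \<phi> (3 mod 10)"
      using K1(1) K1(2) by (simp add: phis xmat_def ymat_def)
    have xy4: "\<phi> (4 mod 10) ** xmat b 4 = xmat c 4 ** \<phi> (4 - 1) \<and> \<phi> (4 - 1) ** ymat b 4 = ymat c 4 ** \<phi> (4 mod 10)"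
      using K1(3) K1(4) by (simp add: phis xmat_def ymat_def)
    have xy5: "\<phi> (5 mod 10) ** xmat b 5 = xmat c 5 ** \<phi> (5 - 1) \<and> \<phi> (5 - 1) ** ymat b 5 = ymat c 5 ** \<phi> (5 mod 10)"
      using K2(1) K2(2) by (simp add: phis xmat_def ymat_def)
    have xy6: "\<phi> (6 mod 10) ** xmat b 6 = xmat c 6 ** \<phi> (6 - 1) \<and> \<phi> (6 - 1) ** ymat b 6 = ymat c 6 ** \<phi> (6 mod 10)"
      using K2(3) K2(4) by (simp add: phis xmat_def ymat_def)
    have xy7: "\<phi> (7 mod 10) ** xmat b 7 = xmat c 7 ** \<phi> (7 - 1) \<and> \<phi> (7 - 1) ** ymat b 7 = ymat c 7 ** \<phi> (7 mod 10)"
      using K3(1) K3(2) by (simp add: phis xmat_def ymat_def)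
    have xy8: "\<phi> (8 mod 10) ** xmat b 8 = xmat c 8 ** \<phi> (8 - 1) \<and> \<phi> (8 - 1) ** ymat b 8 = ymat c 8 ** \<phi> (8 mod 10)"
      using K3(3) K3(4) by (simp add: phis xmat_def ymat_def)
    have xy9: "\<phi> (9 mod 10) ** xmat b 9 = xmat c 9 ** \<phi> (9 - 1) \<and> \<phi> (9 - 1) ** ymat b 9 = ymat c 9 ** \<phi> (9 mod 10)"
      using K4(1) K4(2) by (simp add: phis xmat_def ymat_def)
    have xy10: "\<phi> (10 mod 10) ** xmat b 10 = xmat c 10 ** \<phi> (10 - 1) \<and> \<phi> (10 - 1) ** ymat b 10 = ymat c 10 ** \<phi> (10 mod 10)"
      using K4(3) K4(4) F50 by (simp add: phis xmat_def ymat_def)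
    show "M_iso b c" unfolding M_iso_def
    proof (rule exI[of _ \<phi>], rule conjI)
      show "\<forall>i<10. invertible (\<phi> i)"
      proof (intro allI impI)
        fix i :: nat assume "i < 10"
        then have "i = 0 \<or> i = 1 \<or> i = 2 \<or> i = 3 \<or> i = 4 \<or> i = 5 \<or> i = 6 \<or> i = 7 \<or> i = 8 \<or> i = 9" by arith
        then show "invertible (\<phi> i)" using invs by (auto simp: phis)
      qed
      show "\<forall>j\<in>{1..10}. \<phi> (j mod 10) ** xmat b j = xmat c j ** \<phi> (j - 1) \<and>
                    \<phi> (j - 1) ** ymat b j = ymat c j ** \<phi> (j mod 10)"
      proof
        fix j :: nat assume "j \<in> {1..10}"
        then have "j = 1 \<or> j = 2 \<or> j = 3 \<or> j = 4 \<or> j = 5 \<or> j = 6 \<or> j = 7 \<or> j = 8 \<or> j = 9 \<or> j = 10" by (simp, arith)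
        then show "\<phi> (j mod 10) ** xmat b j = xmat c j ** \<phi> (j - 1) \<and>
                    \<phi> (j - 1) ** ymat b j = ymat c j ** \<phi> (j mod 10)"
          by (elim disjE) (simp_all only: xy1 xy2 xy3 xy4 xy5 xy6 xy7 xy8 xy9 xy10)
      qed
    qed
  qed
  have MI: "M_iso b c \<longleftrightarrow> ?E" by (rule iffI[OF F B])
  show ?thesis by (rule trans[OF MI R[symmetric]])
qed

end
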